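(* Let $\kappa>0$ and $\delta_s=\kappa\sqrt s$. For $0\le s\le t<1/\kappa^2$ and $x\in\mathbb R$ define $\phi_{s|t}(x)=\frac{1-\delta_s}{1-\delta_t}x$ if $x\in[\delta_t-1,1-\delta_t]$; $\phi_{s|t}(x)=\sqrt{s/t}\,x-(1-\sqrt{s/t})$ if $x\le\delta_t-1$; $\phi_{s|t}(x)=\sqrt{s/t}\,x+(1-\sqrt{s/t})$ if $x\ge1-\delta_t$. Then for every $t\in(0,1/\kappa^2)$ and $x\in\mathbb R$, the map $s\mapsto x_s:=\phi_{s|t}(x)$ is continuous on $[0,t]$, satisfies $x_t=x$, and solves $\frac{d}{ds}x_s=-\frac12\hat s_{s,\delta_s}(x_s)$ for all $s\in(0,t)$; moreover the trajectory stays in the same region ($x_s\le\delta_s-1$, $x_s\ge1-\delta_s$, or $x_s\in[\delta_s-1,1-\delta_s]$, respectively) for all $s\in(0,t]$. In particular $\phi_{0|t}(x)=x/(1-\delta_t)$ if $x\in[\delta_t-1,1-\delta_t]$ and $\phi_{0|t}(x)=\mathrm{sgn}(x)$ otherwise.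
   Context: Smoothed PL-ESF (training set $\{-1,1\}$), for $\delta\in(0,1)$ and $t>0$: $\hat s_{t,\delta}(x)=-(x+1)/t$ if $x\le\delta-1$; $-(x-1)/t$ if $x\ge1-\delta$; $\frac{\delta}{1-\delta}\cdot\frac xt$ if $x\in(\delta-1,1-\delta)$. *)

theory Defs
  imports "HOL-Analysis.Analysis"
begin

text \<open>Smoothed PL-ESF score for training set {-1,1}, parameters t > 0, delta in (0,1).\<close>
definition shat :: "real \<Rightarrow> real \<Rightarrow> real \<Rightarrow> real" where
  "shat t \<delta> x =
     (if x \<le> \<delta> - 1 then - (x + 1) / t
      else if x \<ge> 1 - \<delta> then - (x - 1) / t
      else (\<delta> / (1 - \<delta>)) * (x / t))"

definition dlt :: "real \<Rightarrow> real \<Rightarrow> real" where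
  "dlt \<kappa> s = \<kappa> * sqrt s"

definition phi :: "real \<Rightarrow> real \<Rightarrow> real \<Rightarrow> real \<Rightarrow> real" where
  "phi \<kappa> s t x =
     (if x \<le> dlt \<kappa> t - 1 then sqrt (s / t) * x - (1 - sqrt (s / t))
      else if x \<ge> 1 - dlt \<kappa> t then sqrt (s / t) * x + (1 - sqrt (s / t))
      else (1 - dlt \<kappa> s) / (1 - dlt \<kappa> t) * x)"

end

theory Submission
  imports Defs
begin

lemma sq_facts:
  fixes \<kappa> t :: real
  assumes "\<kappa> > 0" and "0 < t" and "t < 1 / \<kappa>\<^sup>2"
  shows "\<kappa> * sqrt t < 1"
proof -
  have "\<kappa>\<^sup>2 * t < 1" using assms by (simp add: field_simps)
  hence "(\<kappa> * sqrt t)\<^sup>2 < 1" using assms by (simp add: power_mult_distrib)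
  thus ?thesis using assms by (smt (verit) one_le_power)
qed

lemma aux_cancel:
  fixes a b c q x :: real
  assumes "b \<noteq> 0" "c \<noteq> 0" "q \<noteq> 0"
  shows "(a * q) / b * (b / c * x / (q * q)) = a * x / (c * q)"
  using assms by (simp add: field_simps)

lemma dmono: "0 \<le> \<kappa> \<Longrightarrow> s \<le> t \<Longrightarrow> dlt \<kappa> s \<le> dlt \<kappa> t"
  unfolding dlt_def by (simp add: mult_left_mono)

lemma dsplit: "0 \<le> s \<Longrightarrow> 0 < t \<Longrightarrow> dlt \<kappa> s = sqrt (s/t) * dlt \<kappa> t"
  unfolding dlt_def by (simp add: real_sqrt_divide)

lemma deriv_r:
  assumes "0 < s" "0 < t"
  shows "((\<lambda>s. sqrt (s/t)) has_real_derivative (sqrt (s/t) / (2 * s))) (at s)"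
proof -
  have "((\<lambda>s. sqrt (s/t)) has_real_derivative (inverse (sqrt (s/t)) / 2 * (1/t))) (at s)"
    using assms by (auto intro!: derivative_eq_intros simp: divide_less_0_iff)
  moreover have "inverse (sqrt (s/t)) / 2 * (1/t) = sqrt (s/t) / (2 * s)"
    using assms by (simp add: real_sqrt_divide field_simps)
  ultimately show ?thesis by simp
qed


theorem mainTheorem5:
  fixes \<kappa> t x :: real
  assumes "\<kappa> > 0" and "0 < t" and "t < 1 / \<kappa>\<^sup>2"
  shows "continuous_on {0..t} (\<lambda>s. phi \<kappa> s t x)
    \<and> phi \<kappa> t t x = x
    \<and> (\<forall>s. 0 < s \<and> s < t \<longrightarrow>
          ((\<lambda>s. phi \<kappa> s t x) has_real_derivative
              (- (1/2) * shat s (dlt \<kappa> s) (phi \<kappa> s t x))) (at s))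
    \<and> (x \<le> dlt \<kappa> t - 1 \<longrightarrow> (\<forall>s\<in>{0<..t}. phi \<kappa> s t x \<le> dlt \<kappa> s - 1))
    \<and> (x \<ge> 1 - dlt \<kappa> t \<longrightarrow> (\<forall>s\<in>{0<..t}. phi \<kappa> s t x \<ge> 1 - dlt \<kappa> s))
    \<and> (x \<in> {dlt \<kappa> t - 1 .. 1 - dlt \<kappa> t} \<longrightarrow>
          (\<forall>s\<in>{0<..t}. phi \<kappa> s t x \<in> {dlt \<kappa> s - 1 .. 1 - dlt \<kappa> s}))
    \<and> phi \<kappa> 0 t x = (if x \<in> {dlt \<kappa> t - 1 .. 1 - dlt \<kappa> t}
                       then x / (1 - dlt \<kappa> t) else sgn x)"
proof -
  define d where "d = dlt \<kappa> t"
  have d1: "d < 1" using sq_facts[OF assms] by (simp add: d_def dlt_def)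
  have d0: "0 \<le> d" using assms by (simp add: d_def dlt_def)
  have ds: "\<And>s. 0 \<le> s \<Longrightarrow> dlt \<kappa> s = sqrt (s/t) * d"
    unfolding d_def using assms(2) dsplit by blast
  have dl1: "\<And>s. s \<le> t \<Longrightarrow> dlt \<kappa> s < 1" using dmono[of \<kappa> _ t] assms d1 d_def by fastforce
  have r1: "\<And>s. s \<le> t \<Longrightarrow> sqrt (s/t) \<le> 1" using assms by simp
  have sh1: "\<And>s y. 0 < s \<Longrightarrow> s \<le> t \<Longrightarrow> y \<ge> 1 - dlt \<kappa> s \<Longrightarrow> shat s (dlt \<kappa> s) y = - (y - 1) / s"
  proof -
    fix s y :: real assume h: "0 < s" "s \<le> t" "y \<ge> 1 - dlt \<kappa> s"
    have "dlt \<kappa> s < 1" using dmono[of \<kappa> s t] h assms d1 d_def by simp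
    thus "shat s (dlt \<kappa> s) y = - (y - 1) / s" using h unfolding shat_def by auto
  qed
  consider (A) "x \<le> d - 1" | (B) "\<not> x \<le> d - 1" "x \<ge> 1 - d" | (C) "d - 1 < x" "x < 1 - d" by linarith
  then show ?thesis
  proof cases
    case A
    have ph: "\<And>s. phi \<kappa> s t x = sqrt (s/t) * x - (1 - sqrt (s/t))"
      using A unfolding phi_def d_def by simp
    have reg: "phi \<kappa> s t x \<le> dlt \<kappa> s - 1" if "0 < s" "s \<le> t" for s
    proof -
      have "sqrt (s/t) * (x+1) \<le> sqrt (s/t) * d" using A that assms by (intro mult_left_mono) auto
      hence "sqrt (s/t) * x + sqrt (s/t) \<le> sqrt (s/t) * d" by (simp add: algebra_simps)
      thus ?thesis using ph[of s] ds[of s] that by linarith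
    qed
    have reg2: "phi \<kappa> s t x \<ge> dlt \<kappa> s - 1" if "0 < s" "s \<le> t" "x = d - 1" for s
    proof -
      have e: "phi \<kappa> s t x = sqrt (s/t) * (x + 1) - 1" using ph[of s] by (simp add: algebra_simps)
      show ?thesis using e ds[of s] that by simp
    qed
    have der: "((\<lambda>s. phi \<kappa> s t x) has_real_derivative
              (- (1/2) * shat s (dlt \<kappa> s) (phi \<kappa> s t x))) (at s)" if "0 < s" "s < t" for s
    proof -
      have dv: "((\<lambda>s. sqrt (s/t) * x - (1 - sqrt (s/t))) has_real_derivative
              (sqrt (s/t) / (2 * s) * x - (0 - sqrt (s/t) / (2 * s)))) (at s)"
        by (rule DERIV_diff[OF DERIV_cmult_right[OF deriv_r[OF that(1) assms(2)]]
                       DERIV_diff[OF DERIV_const deriv_r[OF that(1) assms(2)]]])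
      have sh: "shat s (dlt \<kappa> s) (phi \<kappa> s t x) = - (phi \<kappa> s t x + 1) / s"
        using reg[of s] that unfolding shat_def by simp
      have eq: "sqrt (s/t) / (2 * s) * x - (0 - sqrt (s/t) / (2 * s)) = - (1/2) * shat s (dlt \<kappa> s) (phi \<kappa> s t x)"
        unfolding sh unfolding ph[of s] using that by (simp add: field_simps)
      have fe: "(\<lambda>s. phi \<kappa> s t x) = (\<lambda>s. sqrt (s/t) * x - (1 - sqrt (s/t)))" using ph by auto
      show ?thesis by (subst fe) (rule DERIV_cong[OF dv eq])
    qed
    have cont: "continuous_on {0..t} (\<lambda>s. phi \<kappa> s t x)"
      unfolding ph using assms(2) by (intro continuous_intros) auto
    have p0: "phi \<kappa> 0 t x = -1" using ph by simp
    have sg: "x \<noteq> d - 1 \<Longrightarrow> sgn x = -1" using A d1 by (simp add: sgn_if)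
    have ni: "x \<notin> {d - 1 .. 1 - d} \<or> x = d - 1" using A by auto
    show ?thesis
    proof (intro conjI)
      show "phi \<kappa> t t x = x" using ph assms by simp
      show "\<forall>s. 0 < s \<and> s < t \<longrightarrow> ((\<lambda>s. phi \<kappa> s t x) has_real_derivative
              (- (1/2) * shat s (dlt \<kappa> s) (phi \<kappa> s t x))) (at s)"
        by (intro allI impI) (rule der; simp)
      show "x \<le> dlt \<kappa> t - 1 \<longrightarrow> (\<forall>s\<in>{0<..t}. phi \<kappa> s t x \<le> dlt \<kappa> s - 1)"
        using reg by (intro impI ballI) (simp add: greaterThanAtMost_iff)
      show "x \<ge> 1 - dlt \<kappa> t \<longrightarrow> (\<forall>s\<in>{0<..t}. phi \<kappa> s t x \<ge> 1 - dlt \<kappa> s)" using A d1 d_def by auto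
      show "x \<in> {dlt \<kappa> t - 1 .. 1 - dlt \<kappa> t} \<longrightarrow>
          (\<forall>s\<in>{0<..t}. phi \<kappa> s t x \<in> {dlt \<kappa> s - 1 .. 1 - dlt \<kappa> s})"
      proof (intro impI ballI)
        fix s assume "x \<in> {dlt \<kappa> t - 1 .. 1 - dlt \<kappa> t}" "s \<in> {0<..t}"
        hence "x = d - 1" "0 < s" "s \<le> t" using A d_def by auto
        thus "phi \<kappa> s t x \<in> {dlt \<kappa> s - 1 .. 1 - dlt \<kappa> s}" using reg[of s] reg2[of s] dl1[of s] by simp
      qed
      show "phi \<kappa> 0 t x = (if x \<in> {dlt \<kappa> t - 1 .. 1 - dlt \<kappa> t}
                       then x / (1 - dlt \<kappa> t) else sgn x)"
      proof (cases "x = d - 1")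
        case True
        hence "x \<in> {d - 1 .. 1 - d}" using d1 by simp
        moreover have "x / (1 - d) = -1" using True d1 by (simp add: field_simps)
        ultimately show ?thesis using p0 unfolding d_def[symmetric] by simp
      next
        case False
        hence "x \<notin> {d - 1 .. 1 - d}" using ni by blast
        thus ?thesis using p0 sg[OF False] unfolding d_def[symmetric] by (simp only: if_False if_P if_not_P)
      qed
    qed (fact cont)
  next
    case B
    have ph: "\<And>s. phi \<kappa> s t x = sqrt (s/t) * x + (1 - sqrt (s/t))"
      using B unfolding phi_def d_def by simp
    have reg: "phi \<kappa> s t x \<ge> 1 - dlt \<kappa> s" if "0 < s" "s \<le> t" for s
    proof -
      have "sqrt (s/t) * (1 - x) \<le> sqrt (s/t) * d" using B that assms by (intro mult_left_mono) auto
      hence "sqrt (s/t) - sqrt (s/t) * x \<le> sqrt (s/t) * d" by (simp add: algebra_simps)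
      thus ?thesis using ph[of s] ds[of s] that by linarith
    qed
    have reg2: "phi \<kappa> s t x \<le> 1 - dlt \<kappa> s" if "0 < s" "s \<le> t" "x = 1 - d" for s
    proof -
      have e: "phi \<kappa> s t x = sqrt (s/t) * (x - 1) + 1" using ph[of s] by (simp add: algebra_simps)
      show ?thesis using e ds[of s] that by simp
    qed
    have der: "((\<lambda>s. phi \<kappa> s t x) has_real_derivative
              (- (1/2) * shat s (dlt \<kappa> s) (phi \<kappa> s t x))) (at s)" if "0 < s" "s < t" for s
    proof -
      have dv: "((\<lambda>s. sqrt (s/t) * x + (1 - sqrt (s/t))) has_real_derivative
              (sqrt (s/t) / (2 * s) * x + (0 - sqrt (s/t) / (2 * s)))) (at s)"
        by (rule DERIV_add[OF DERIV_cmult_right[OF deriv_r[OF that(1) assms(2)]]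
                       DERIV_diff[OF DERIV_const deriv_r[OF that(1) assms(2)]]])
      have sh: "shat s (dlt \<kappa> s) (phi \<kappa> s t x) = - (phi \<kappa> s t x - 1) / s"
        using reg[of s] sh1[of s] that by simp
      have eq: "sqrt (s/t) / (2 * s) * x + (0 - sqrt (s/t) / (2 * s)) = - (1/2) * shat s (dlt \<kappa> s) (phi \<kappa> s t x)"
        unfolding sh unfolding ph[of s] using that by (simp add: field_simps)
      have fe: "(\<lambda>s. phi \<kappa> s t x) = (\<lambda>s. sqrt (s/t) * x + (1 - sqrt (s/t)))" using ph by auto
      show ?thesis by (subst fe) (rule DERIV_cong[OF dv eq])
    qed
    have cont: "continuous_on {0..t} (\<lambda>s. phi \<kappa> s t x)"
      unfolding ph using assms(2) by (intro continuous_intros) auto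
    have p0: "phi \<kappa> 0 t x = 1" using ph by simp
    have sg: "x \<noteq> 1 - d \<Longrightarrow> sgn x = 1" using B d1 by (simp add: sgn_if)
    have ni: "x \<notin> {d - 1 .. 1 - d} \<or> x = 1 - d" using B by auto
    show ?thesis
    proof (intro conjI)
      show "phi \<kappa> t t x = x" using ph assms by simp
      show "\<forall>s. 0 < s \<and> s < t \<longrightarrow> ((\<lambda>s. phi \<kappa> s t x) has_real_derivative
              (- (1/2) * shat s (dlt \<kappa> s) (phi \<kappa> s t x))) (at s)"
        by (intro allI impI) (rule der; simp)
      show "x \<le> dlt \<kappa> t - 1 \<longrightarrow> (\<forall>s\<in>{0<..t}. phi \<kappa> s t x \<le> dlt \<kappa> s - 1)" using B d_def by auto
      show "x \<ge> 1 - dlt \<kappa> t \<longrightarrow> (\<forall>s\<in>{0<..t}. phi \<kappa> s t x \<ge> 1 - dlt \<kappa> s)"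
        using reg by (intro impI ballI) (simp add: greaterThanAtMost_iff)
      show "x \<in> {dlt \<kappa> t - 1 .. 1 - dlt \<kappa> t} \<longrightarrow>
          (\<forall>s\<in>{0<..t}. phi \<kappa> s t x \<in> {dlt \<kappa> s - 1 .. 1 - dlt \<kappa> s})"
      proof (intro impI ballI)
        fix s assume "x \<in> {dlt \<kappa> t - 1 .. 1 - dlt \<kappa> t}" "s \<in> {0<..t}"
        hence "x = 1 - d" "0 < s" "s \<le> t" using B d_def by auto
        thus "phi \<kappa> s t x \<in> {dlt \<kappa> s - 1 .. 1 - dlt \<kappa> s}" using reg[of s] reg2[of s] dl1[of s] by simp
      qed
      show "phi \<kappa> 0 t x = (if x \<in> {dlt \<kappa> t - 1 .. 1 - dlt \<kappa> t}
                       then x / (1 - dlt \<kappa> t) else sgn x)"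
      proof (cases "x = 1 - d")
        case True
        hence "x \<in> {d - 1 .. 1 - d}" using d1 by simp
        moreover have "x / (1 - d) = 1" using True d1 by (simp add: field_simps)
        ultimately show ?thesis using p0 unfolding d_def[symmetric] by simp
      next
        case False
        hence "x \<notin> {d - 1 .. 1 - d}" using ni by blast
        thus ?thesis using p0 sg[OF False] unfolding d_def[symmetric] by (simp only: if_False if_P if_not_P)
      qed
    qed (fact cont)
  next
    case C
    have ph: "\<And>s. phi \<kappa> s t x = (1 - dlt \<kappa> s) / (1 - d) * x"
      using C unfolding phi_def d_def by auto
    have reg: "phi \<kappa> s t x \<in> {dlt \<kappa> s - 1 <..< 1 - dlt \<kappa> s}" if "0 < s" "s \<le> t" for s
    proof -
      have a: "dlt \<kappa> s < 1" using dmono[of \<kappa> s t] that assms d1 d_def by simp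
      have "\<bar>x / (1 - d)\<bar> < 1" using C d1 by (simp add: abs_less_iff field_simps)
      hence "(1 - dlt \<kappa> s) * \<bar>x / (1 - d)\<bar> < (1 - dlt \<kappa> s) * 1"
        using a by (intro mult_strict_left_mono) auto
      hence "\<bar>(1 - dlt \<kappa> s) * (x / (1 - d))\<bar> < (1 - dlt \<kappa> s) * 1"
        using a by (simp only: abs_mult abs_of_pos[of "1 - dlt \<kappa> s"] diff_gt_0_iff_gt)
      hence "- (1 - dlt \<kappa> s) < (1 - dlt \<kappa> s) * (x / (1 - d)) \<and> (1 - dlt \<kappa> s) * (x / (1 - d)) < 1 - dlt \<kappa> s"
        unfolding abs_less_iff mult_1_right by linarith
      moreover have "phi \<kappa> s t x = (1 - dlt \<kappa> s) * (x / (1 - d))" using ph[of s] by simp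
      ultimately show ?thesis by simp
    qed
    have der: "((\<lambda>s. phi \<kappa> s t x) has_real_derivative
              (- (1/2) * shat s (dlt \<kappa> s) (phi \<kappa> s t x))) (at s)" if "0 < s" "s < t" for s
    proof -
      have dv: "((\<lambda>s. (1 - \<kappa> * sqrt s) / (1 - d) * x) has_real_derivative
              ((0 - \<kappa> * (inverse (sqrt s) / 2)) / (1 - d) * x)) (at s)"
        using that d1 by (auto intro!: derivative_eq_intros)
      have sh: "shat s (dlt \<kappa> s) (phi \<kappa> s t x) = (dlt \<kappa> s / (1 - dlt \<kappa> s)) * (phi \<kappa> s t x / s)"
        using reg[of s] that unfolding shat_def by auto
      have a: "dlt \<kappa> s < 1" using dmono[of \<kappa> s t] that assms d1 d_def by simp
      have q: "sqrt s * sqrt s = s" using that by simp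
      have eq: "(0 - \<kappa> * (inverse (sqrt s) / 2)) / (1 - d) * x = - (1/2) * shat s (dlt \<kappa> s) (phi \<kappa> s t x)"
      proof -
        define q where "q = sqrt s"
        have q0: "0 < q" using that q_def by simp
        have sq: "s = q * q" using q q_def by simp
        have aq: "\<kappa> * q < 1" using a q_def dlt_def by simp
        have e1: "(0 - \<kappa> * (inverse q / 2)) / (1 - d) * x
            = - (1/2) * ((\<kappa> * q) / (1 - \<kappa> * q) * ((1 - \<kappa> * q) / (1 - d) * x / (q * q)))"
        proof -
          have n1: "1 - \<kappa> * q \<noteq> 0" "1 - d \<noteq> 0" "q \<noteq> 0" using q0 aq d1 by auto
          have "(\<kappa> * q) / (1 - \<kappa> * q) * ((1 - \<kappa> * q) / (1 - d) * x / (q * q)) = \<kappa> * x / ((1 - d) * q)"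
            using n1 by (rule aux_cancel)
          moreover have "(0 - \<kappa> * (inverse q / 2)) / (1 - d) * x = - (1/2) * (\<kappa> * x / ((1 - d) * q))"
            using n1 by (simp add: field_simps)
          ultimately show ?thesis by simp
        qed
        show ?thesis unfolding sh unfolding ph[of s] dlt_def q_def[symmetric] sq[symmetric]
          using e1 sq by simp
      qed
      have fe: "(\<lambda>s. phi \<kappa> s t x) = (\<lambda>s. (1 - \<kappa> * sqrt s) / (1 - d) * x)" using ph by (auto simp: dlt_def)
      show ?thesis by (subst fe) (rule DERIV_cong[OF dv eq])
    qed
    have cont: "continuous_on {0..t} (\<lambda>s. phi \<kappa> s t x)"
      unfolding ph dlt_def using d1 by (intro continuous_intros) auto
    have p0: "phi \<kappa> 0 t x = x / (1 - d)" using ph by (simp add: dlt_def)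
    show ?thesis
    proof (intro conjI)
      show "phi \<kappa> t t x = x" using ph assms d1 d_def by simp
      show "\<forall>s. 0 < s \<and> s < t \<longrightarrow> ((\<lambda>s. phi \<kappa> s t x) has_real_derivative
              (- (1/2) * shat s (dlt \<kappa> s) (phi \<kappa> s t x))) (at s)"
        by (intro allI impI) (rule der; simp)
      show "x \<le> dlt \<kappa> t - 1 \<longrightarrow> (\<forall>s\<in>{0<..t}. phi \<kappa> s t x \<le> dlt \<kappa> s - 1)" using C d_def by auto
      show "x \<ge> 1 - dlt \<kappa> t \<longrightarrow> (\<forall>s\<in>{0<..t}. phi \<kappa> s t x \<ge> 1 - dlt \<kappa> s)" using C d_def by auto
      show "x \<in> {dlt \<kappa> t - 1 .. 1 - dlt \<kappa> t} \<longrightarrow>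
          (\<forall>s\<in>{0<..t}. phi \<kappa> s t x \<in> {dlt \<kappa> s - 1 .. 1 - dlt \<kappa> s})"
      proof (intro impI ballI)
        fix s assume "s \<in> {0<..t}"
        thus "phi \<kappa> s t x \<in> {dlt \<kappa> s - 1 .. 1 - dlt \<kappa> s}" using reg[of s] by simp
      qed
      show "phi \<kappa> 0 t x = (if x \<in> {dlt \<kappa> t - 1 .. 1 - dlt \<kappa> t}
                       then x / (1 - dlt \<kappa> t) else sgn x)"
        using p0 C unfolding d_def[symmetric] by auto
    qed (fact cont)
  qed
qed

end
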